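(* A GFNN $\mathcal{N}=(V,E,V_{\mathrm{in}},V_{\mathrm{out}},\Omega,\Theta,\Lambda)$ is irreducible with respect to the nonlinearity $\tanh$ if and only if there do not exist nodes $u_1,u_2\in V\setminus V_{\mathrm{in}}$, $u_1\ne u_2$, and an $s\in\{-1,1\}$ such that $P:=\mathrm{par}(u_1)=\mathrm{par}(u_2)$, $\omega_{u_1v}=s\,\omega_{u_2v}$ for all $v\in P$, and $\theta_{u_1}=s\,\theta_{u_2}$.
   Context: A GFNN is a tuple $(V,E,V_{\mathrm{in}},V_{\mathrm{out}},\Omega,\Theta,\Lambda)$ where $(V,E)$ is a finite loopless directed acyclic graph, $V_{\mathrm{in}}$ is the set of nodes without incoming edges, $V_{\mathrm{out}}\subset V\setminus V_{\mathrm{in}}$, $\Omega=\{\omega_{\tilde vv}\in\mathbb{R}\setminus\{0\}:(v,\tilde v)\in E\}$, $\Theta=\{\theta_v\in\mathbb{R}:v\in V\setminus V_{\mathrm{in}}\}$, and $\Lambda$ consists of real output scalars. $\mathrm{par}(u)=\{v:(v,u)\in E\}$. An affine symmetry of a nonlinearity $\rho$ is $(\zeta,\{(\alpha_s,\beta_s,\gamma_s)\}_{s\in\mathcal{I}})$ with $\mathcal{I}$ nonempty finite, real entries, $\sum_s\alpha_s\rho(\beta_st+\gamma_s)=\zeta$ for all $t\in\mathbb{R}$, and no proper $\mathcal{I}'\subsetneq\mathcal{I}$ with $\{\rho(\beta_s\cdot+\gamma_s)\}_{s\in\mathcal{I}'}\cup\{\mathbf1\}$ linearly dependent. $\mathcal{N}$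 is $\rho$-reducible if there exist a nonempty $U\subset V$ whose nodes have a common parent set $P$, nonzero reals $\kappa_v$ ($v\in P$) and $\beta_u$ ($u\in U$) with $\omega_{uv}=\beta_u\kappa_v$ for all $u\in U,v\in P$, and $\zeta\in\mathbb{R}$ and nonzero reals $\alpha_u$ such that $(\zeta,\{(\alpha_u,\beta_u,\theta_u)\}_{u\in U})$ is an affine symmetry of $\rho$; otherwise $\mathcal{N}$ is irreducible. *)

theory Defs
  imports Complex_Main
begin

text \<open>A GFNN (V,E,Vin,Vout,Omega,Theta,Lambda). Nodes have type 'a.
  The weight of the edge (v,u) (from v to u) is w u v (= omega_{uv});
  the bias of a non-input node u is th u; output scalars are lam.\<close>

definition par :: "('a \<times> 'a) set \<Rightarrow> 'a \<Rightarrow> 'a set" where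
  "par E u = {v. (v, u) \<in> E}"

definition gfnn :: "'a set \<Rightarrow> ('a \<times> 'a) set \<Rightarrow> 'a set \<Rightarrow> 'a set
    \<Rightarrow> ('a \<Rightarrow> 'a \<Rightarrow> real) \<Rightarrow> ('a \<Rightarrow> real) \<Rightarrow> ('a \<Rightarrow> real) \<Rightarrow> bool" where
  "gfnn V E Vin Vout w th lam \<longleftrightarrow>
     finite V \<and> E \<subseteq> V \<times> V \<and> (\<forall>v. (v, v) \<notin> E) \<and> acyclic E \<and>
     Vin = {v \<in> V. \<not> (\<exists>u. (u, v) \<in> E)} \<and>
     Vout \<subseteq> V - Vin \<and>
     (\<forall>v u. (v, u) \<in> E \<longrightarrow> w u v \<noteq> 0)"

definition lin_dep_with_one :: "'i set \<Rightarrow> ('i \<Rightarrow> real \<Rightarrow> real) \<Rightarrow> bool" where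
  "lin_dep_with_one I f \<longleftrightarrow>
     (\<exists>c :: 'i \<Rightarrow> real. \<exists>c0 :: real.
        (c0 \<noteq> 0 \<or> (\<exists>s\<in>I. c s \<noteq> 0)) \<and>
        (\<forall>t. (\<Sum>s\<in>I. c s * f s t) + c0 = 0))"

definition affine_symmetry :: "(real \<Rightarrow> real) \<Rightarrow> real \<Rightarrow> 'i set
    \<Rightarrow> ('i \<Rightarrow> real) \<Rightarrow> ('i \<Rightarrow> real) \<Rightarrow> ('i \<Rightarrow> real) \<Rightarrow> bool" where
  "affine_symmetry \<rho> \<zeta> I \<alpha> \<beta> \<gamma> \<longleftrightarrow>
     finite I \<and> I \<noteq> {} \<and>
     (\<forall>t. (\<Sum>s\<in>I. \<alpha> s * \<rho> (\<beta> s * t + \<gamma> s)) = \<zeta>) \<and>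
     \<not> (\<exists>I'. I' \<subset> I \<and> lin_dep_with_one I' (\<lambda>s t. \<rho> (\<beta> s * t + \<gamma> s)))"

definition reducible :: "(real \<Rightarrow> real) \<Rightarrow> 'a set \<Rightarrow> ('a \<times> 'a) set \<Rightarrow> 'a set
    \<Rightarrow> ('a \<Rightarrow> 'a \<Rightarrow> real) \<Rightarrow> ('a \<Rightarrow> real) \<Rightarrow> bool" where
  "reducible \<rho> V E Vin w th \<longleftrightarrow>
     (\<exists>U P (\<kappa> :: 'a \<Rightarrow> real) (\<beta> :: 'a \<Rightarrow> real) (\<zeta> :: real) (\<alpha> :: 'a \<Rightarrow> real).
        U \<noteq> {} \<and> U \<subseteq> V - Vin \<and>
        (\<forall>u\<in>U. par E u = P) \<and>
        (\<forall>v\<in>P. \<kappa> v \<noteq> 0) \<and> (\<forall>u\<in>U. \<beta> u \<noteq> 0) \<and>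
        (\<forall>u\<in>U. \<forall>v\<in>P. w u v = \<beta> u * \<kappa> v) \<and>
        (\<forall>u\<in>U. \<alpha> u \<noteq> 0) \<and>
        affine_symmetry \<rho> \<zeta> U \<alpha> \<beta> th)"

definition irreducible :: "(real \<Rightarrow> real) \<Rightarrow> 'a set \<Rightarrow> ('a \<times> 'a) set \<Rightarrow> 'a set
    \<Rightarrow> ('a \<Rightarrow> 'a \<Rightarrow> real) \<Rightarrow> ('a \<Rightarrow> real) \<Rightarrow> bool" where
  "irreducible \<rho> V E Vin w th \<longleftrightarrow> \<not> reducible \<rho> V E Vin w th"

end

theory Submission
  imports "HOL-Complex_Analysis.Complex_Analysis" Defs
begin

lemma tanh_of_real_c: "tanh (complex_of_real x) = complex_of_real (tanh x)"
  by (simp add: tanh_def sinh_field_def cosh_field_def exp_of_real[symmetric])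

lemma cosh_zero_c:
  assumes "cosh (w::complex) = 0"
  shows "Re w = 0 \<and> (\<exists>n::int. Im w = - (n * pi + pi/2))"
proof -
  have "cos (\<i> * w) = 0" using assms by (simp add: cosh_conv_cos)
  then obtain n::int where n: "\<i> * w = complex_of_real(n * pi) + of_real pi/2"
    by (auto simp: cos_eq_0)
  have "Re (\<i> * w) = n*pi + pi/2" "Im (\<i> * w) = 0" using n by simp_all
  then show ?thesis by (auto intro!: exI[of _ n])
qed

lemma cosh_nz_strip:
  assumes "\<bar>Im (w::complex)\<bar> < pi/2"
  shows "cosh w \<noteq> 0"
proof
  assume "cosh w = 0"
  then obtain n::int where n: "Im w = - (n * pi + pi/2)" using cosh_zero_c by blast
  have "\<bar>n * pi + pi/2\<bar> < pi/2" using assms by (simp only: n abs_minus_cancel)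
  moreover have "n * pi + pi/2 = pi * (n + 1/2)" by (simp add: algebra_simps)
  ultimately have "pi * \<bar>real_of_int n + 1/2\<bar> < pi * (1/2)"
    by (simp add: abs_mult)
  hence "\<bar>real_of_int n + 1/2\<bar> < 1/2"
    using pi_gt_zero mult_less_cancel_left_pos by blast
  hence "real_of_int n > -1" "real_of_int n < 0" by arith+
  hence "n > -1" "n < 0" by linarith+
  thus False by linarith
qed

lemma cosh_i_half: "cosh (\<i> * complex_of_real (pi/2)) = 0"
  by (simp add: cosh_conv_cos cos_of_real[symmetric])

lemma sinh_i_half: "sinh (\<i> * complex_of_real (pi/2)) = \<i>"
  by (simp add: sinh_conv_sin sin_of_real[symmetric])

lemma tanh_aff_of_real:
  "tanh (complex_of_real p * complex_of_real x + complex_of_real q) = complex_of_real (tanh (p*x+q))"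
  by (metis tanh_of_real_c of_real_mult of_real_add)

lemma core:
  fixes U :: "'a set" and a b c :: "'a \<Rightarrow> real"
  assumes fin: "finite U" and u0: "u0 \<in> U"
    and bpos: "\<forall>u\<in>U. b u > 0" and bmax: "\<forall>u\<in>U. b u \<le> b u0"
    and dst: "\<forall>u\<in>U. u \<noteq> u0 \<longrightarrow> (b u \<noteq> b u0 \<or> c u \<noteq> c u0)"
    and a0: "a u0 \<noteq> 0"
    and eq: "\<forall>t. (\<Sum>u\<in>U. a u * tanh (b u * t + c u)) = \<zeta>"
  shows False
proof -
  define B where "B = b u0"
  define c0 where "c0 = c u0"
  have Bpos: "B > 0" using bpos u0 by (simp add: B_def)
  define r where "r = pi / (2*B)"
  have rpos: "r > 0" using Bpos by (simp add: r_def)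
  define S where "S = {z::complex. Im z < r} \<inter> {z. Im z > -r}"
  have openS: "open S" unfolding S_def
    by (intro open_Int open_halfspace_Im_lt open_halfspace_Im_gt)
  have convS: "convex S" unfolding S_def
    by (intro convex_Int convex_halfspace_Im_lt convex_halfspace_Im_gt)
  define F :: "complex \<Rightarrow> complex" where "F z = (\<Sum>u\<in>U. of_real (a u) * tanh (of_real (b u) * z + of_real (c u))) - of_real \<zeta>" for z
  have strip: "cosh (of_real (b u) * z + of_real (c u)) \<noteq> 0" if "u \<in> U" "z \<in> S" for u z
  proof (rule cosh_nz_strip)
    have bu: "0 < b u" "b u \<le> B" using bpos bmax that by (auto simp: B_def)
    have "\<bar>b u * Im z\<bar> = b u * \<bar>Im z\<bar>" using bu by (simp add: abs_mult)
    also have "\<dots> \<le> B * \<bar>Im z\<bar>" using bu by (intro mult_right_mono) auto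
    also have "\<dots> < B * r" using that Bpos by (auto simp: S_def)
    also have "B * r = pi/2" using Bpos by (simp add: r_def)
    finally show "\<bar>Im (of_real (b u) * z + of_real (c u))\<bar> < pi/2" by simp
  qed
  have holt: "(\<lambda>z. tanh (of_real (b u) * z + of_real (c u))) holomorphic_on S" if "u\<in>U" for u
    unfolding holomorphic_on_open[OF openS]
    by (auto intro!: exI derivative_eq_intros strip[OF that])
  have hol: "F holomorphic_on S"
    unfolding F_def by (intro holomorphic_intros holt)
  have lim: "0 islimpt (\<real>::complex set)"
    unfolding islimpt_approachable
  proof (intro allI impI)
    fix e :: real assume "e > 0"
    show "\<exists>x'::complex\<in>\<real>. x' \<noteq> 0 \<and> dist x' 0 < e"
    proof -
      have "complex_of_real (e/2) \<in> \<real>" "complex_of_real (e/2) \<noteq> 0" "dist (complex_of_real (e/2)) 0 < e"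
        using \<open>e > 0\<close> by (auto simp: dist_norm)
      then show ?thesis by blast
    qed
  qed
  have F0: "F z = 0" if "z \<in> S" for z
  proof (rule analytic_continuation[OF hol openS convex_connected[OF convS] _ _ lim])
    show "\<real> \<subseteq> S" using rpos by (auto simp: S_def elim!: Reals_cases)
    show "0 \<in> S" using rpos by (auto simp: S_def)
    show "z \<in> S" by fact
    fix x :: complex assume "x \<in> \<real>"
    then obtain y where y: "x = of_real y" by (auto elim!: Reals_cases)
    have "F x = of_real ((\<Sum>u\<in>U. a u * tanh (b u * y + c u)) - \<zeta>)"
      by (simp add: F_def y tanh_aff_of_real)
    then show "F x = 0" using eq by simp
  qed
  define zz where "zz s = (\<i> * of_real (pi/2 - s) - of_real c0) / of_real B" for s :: real
  have zzB: "of_real B * zz s + of_real c0 = \<i> * of_real (pi/2 - s)" for s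
    using Bpos by (simp add: zz_def)
  have Imzz: "Im (zz s) = (pi/2 - s) / B" for s
    by (simp add: zz_def Im_divide_of_real)
  have Rezz: "Re (zz s) = - c0 / B" for s
    by (simp add: zz_def Re_divide_of_real)
  have zzS: "zz s \<in> S" if "0 < s" "s < pi" for s
  proof -
    have "(pi/2 - s) / B < (pi/2) / B" using that Bpos by (intro divide_strict_right_mono) auto
    moreover have "(-(pi/2)) / B < (pi/2 - s) / B" using that Bpos
      by (intro divide_strict_right_mono) auto
    ultimately show ?thesis by (simp add: S_def Imzz r_def)
  qed
  define H :: "complex \<Rightarrow> complex" where "H z = (\<Sum>u\<in>U-{u0}. of_real (a u) * tanh (of_real (b u) * z + of_real (c u)))" for z
  have FH: "F z = of_real (a u0) * tanh (of_real B * z + of_real c0) + H z - of_real \<zeta>" for z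
    unfolding F_def H_def B_def c0_def using fin u0 by (simp add: sum.remove)
  define W where "W s = \<i> * complex_of_real (pi/2 - s)" for s
  define L where "L s = of_real (a u0) * sinh (W s) - (of_real \<zeta> - H (zz s)) * cosh (W s)" for s
  have L0: "L s = 0" if "0 < s" "s < pi" for s
  proof -
    have cn: "cosh (W s) \<noteq> 0"
      using strip[OF u0 zzS[OF that]] zzB[of s] by (simp add: W_def B_def c0_def)
    have "of_real (a u0) * tanh (W s) = of_real \<zeta> - H (zz s)"
      using F0[OF zzS[OF that]] by (simp add: FH zzB W_def eq_diff_eq)
    then have "of_real (a u0) * sinh (W s) / cosh (W s) = of_real \<zeta> - H (zz s)"
      by (simp add: tanh_def)
    then show ?thesis using cn by (simp add: L_def field_simps)
  qed
  have pole: "cosh (of_real (b u) * zz 0 + of_real (c u)) \<noteq> 0" if "u \<in> U - {u0}" for u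
  proof
    assume "cosh (of_real (b u) * zz 0 + of_real (c u)) = 0"
    from cosh_zero_c[OF this] obtain n :: int where
      re: "b u * (- c0 / B) + c u = 0" and im: "b u * ((pi/2) / B) = - (n * pi + pi/2)"
      by (auto simp: Imzz Rezz)
    have bu: "0 < b u" "b u \<le> B" using that bpos bmax by (auto simp: B_def)
    have "0 < b u * ((pi/2) / B)" using bu Bpos by simp
    moreover have "b u * ((pi/2) / B) \<le> B * ((pi/2)/B)" using bu Bpos by (intro mult_right_mono) auto
    moreover have "B * ((pi/2)/B) = pi/2" using Bpos by simp
    ultimately have "0 < - (n * pi + pi/2)" "- (n * pi + pi/2) \<le> pi/2" using im by linarith+
    hence "0 < pi * (- n - 1/2)" "pi * (- n - 1/2) \<le> pi * (1/2)" by (simp_all add: algebra_simps)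
    hence "0 < - real_of_int n - 1/2" "- real_of_int n - 1/2 \<le> 1/2"
      by (simp_all add: zero_less_mult_iff mult_le_cancel_left_pos)
    hence "n = -1" by linarith
    with im have "b u * ((pi/2) / B) = pi/2" by simp
    hence "b u = B" using Bpos by (simp add: field_simps)
    moreover with re have "c u = c0" using Bpos by (simp add: field_simps)
    ultimately show False using dst that by (auto simp: B_def c0_def)
  qed
  have zzlim: "(zz \<longlongrightarrow> zz 0) (at_right 0)"
    unfolding zz_def using Bpos by (intro tendsto_intros) auto
  have Wlim: "(W \<longlongrightarrow> W 0) (at_right 0)"
    unfolding W_def by (intro tendsto_intros)
  have Hlim: "((\<lambda>s. H (zz s)) \<longlongrightarrow> H (zz 0)) (at_right 0)"
    unfolding H_def by (intro tendsto_intros zzlim pole) auto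
  have Llim: "(L \<longlongrightarrow> L 0) (at_right 0)"
    unfolding L_def by (intro tendsto_intros Hlim Wlim)
  have ev: "eventually (\<lambda>s. L s = 0) (at_right (0::real))"
    unfolding eventually_at_right_field using pi_gt_zero
    by (intro exI[of _ pi]) (auto intro: L0)
  have "(L \<longlongrightarrow> 0) (at_right 0)"
    by (rule tendsto_eventually) (use ev in \<open>simp add: eventually_mono\<close>)
  hence "L 0 = 0" using Llim tendsto_unique[OF trivial_limit_at_right_real] by metis
  moreover have "L 0 = of_real (a u0) * \<i>"
    using cosh_i_half sinh_i_half by (simp add: L_def W_def)
  ultimately show False using a0 by simp
qed

lemma tanh_nonconst:
  fixes \<beta> \<gamma> c c0 :: real
  assumes "\<beta> \<noteq> 0" "\<forall>t. c * tanh (\<beta> * t + \<gamma>) + c0 = 0"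
  shows "c = 0 \<and> c0 = 0"
proof -
  have "c * tanh (\<beta> * (- \<gamma> / \<beta>) + \<gamma>) + c0 = 0" using assms(2) by blast
  hence c0: "c0 = 0" using assms(1) by simp
  have "c * tanh (\<beta> * ((1 - \<gamma>) / \<beta>) + \<gamma>) + c0 = 0" using assms(2) by blast
  hence "c * tanh 1 = 0" using assms(1) c0 by simp
  hence "c = 0" by simp
  with c0 show ?thesis by simp
qed


lemma no_lin_dep_empty: "\<not> lin_dep_with_one {} f"
  unfolding lin_dep_with_one_def by auto

lemma reducible_imp_pair:
  fixes V Vin :: "'a set" and E :: "('a \<times> 'a) set"
    and w :: "'a \<Rightarrow> 'a \<Rightarrow> real" and th :: "'a \<Rightarrow> real"
  assumes "reducible tanh V E Vin w th"
  shows "\<exists>u1 \<in> V - Vin. \<exists>u2 \<in> V - Vin. u1 \<noteq> u2 \<and>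
          (\<exists>s \<in> {-1, 1::real}. par E u1 = par E u2 \<and>
             (\<forall>v \<in> par E u1. w u1 v = s * w u2 v) \<and> th u1 = s * th u2)"
proof (rule ccontr)
  assume np: "\<not> ?thesis"
  from assms obtain U P \<kappa> \<beta> \<zeta> \<alpha> where
    Une: "U \<noteq> {}" and UV: "U \<subseteq> V - Vin" and parU: "\<forall>u\<in>U. par E u = P"
    and \<beta>nz: "\<forall>u\<in>U. \<beta> u \<noteq> 0" and wU: "\<forall>u\<in>U. \<forall>v\<in>P. w u v = \<beta> u * \<kappa> v"
    and \<alpha>nz: "\<forall>u\<in>U. \<alpha> u \<noteq> 0" and sym: "affine_symmetry tanh \<zeta> U \<alpha> \<beta> th"
    unfolding reducible_def by blast
  from sym have fin: "finite U" and eq: "\<forall>t. (\<Sum>s\<in>U. \<alpha> s * tanh (\<beta> s * t + th s)) = \<zeta>"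
    unfolding affine_symmetry_def by auto
  define \<sigma> where "\<sigma> u = sgn (\<beta> u)" for u
  define b where "b u = \<bar>\<beta> u\<bar>" for u
  define c where "c u = \<sigma> u * th u" for u
  define a where "a u = \<sigma> u * \<alpha> u" for u
  have \<sigma>: "\<sigma> u \<in> {-1, 1}" if "u \<in> U" for u using \<beta>nz that by (auto simp: \<sigma>_def sgn_if)
  have \<beta>\<sigma>: "\<beta> u = \<sigma> u * b u" for u by (simp add: \<sigma>_def b_def sgn_mult_abs)
  have trm: "\<alpha> u * tanh (\<beta> u * t + th u) = a u * tanh (b u * t + c u)" if "u \<in> U" for u t
  proof -
    from \<sigma>[OF that] show ?thesis
    proof
      assume m: "\<sigma> u = -1"
      have "\<beta> u * t + th u = - (b u * t + c u)"
        by (simp add: \<beta>\<sigma> m c_def)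
      then have "tanh (\<beta> u * t + th u) = - tanh (b u * t + c u)"
        by (simp only: tanh_minus)
      then show ?thesis by (simp add: a_def m)
    next
      assume "\<sigma> u \<in> {1}"
      then have m: "\<sigma> u = 1" by simp
      then show ?thesis by (simp add: \<beta>\<sigma> a_def c_def)
    qed
  qed
  have eq2: "\<forall>t. (\<Sum>u\<in>U. a u * tanh (b u * t + c u)) = \<zeta>"
  proof
    fix t
    have "(\<Sum>u\<in>U. a u * tanh (b u * t + c u)) = (\<Sum>u\<in>U. \<alpha> u * tanh (\<beta> u * t + th u))"
      by (rule sum.cong) (simp_all add: trm)
    then show "(\<Sum>u\<in>U. a u * tanh (b u * t + c u)) = \<zeta>" using eq by simp
  qed
  define m where "m = Max (b ` U)"
  have "m \<in> b ` U" unfolding m_def using fin Une by (intro Max_in) auto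
  then obtain u0 where u0: "u0 \<in> U" "b u0 = m" by auto
  have bmax: "\<forall>u\<in>U. b u \<le> b u0" using fin u0 by (auto simp: m_def)
  have bpos: "\<forall>u\<in>U. b u > 0" using \<beta>nz by (auto simp: b_def)
  have dst: "\<forall>u\<in>U. u \<noteq> u0 \<longrightarrow> (b u \<noteq> b u0 \<or> c u \<noteq> c u0)"
  proof (intro ballI impI)
    fix u assume u: "u \<in> U" "u \<noteq> u0"
    show "b u \<noteq> b u0 \<or> c u \<noteq> c u0"
    proof (rule ccontr)
      assume "\<not> ?thesis"
      hence bb: "b u = b u0" and cc: "c u = c u0" by auto
      define s where "s = \<sigma> u * \<sigma> u0"
      have s: "s \<in> {-1, 1}" using \<sigma>[OF u(1)] \<sigma>[OF u0(1)] by (auto simp: s_def)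
      have sq: "\<sigma> u0 * \<sigma> u0 = 1" using \<sigma>[OF u0(1)] by auto
      have "\<beta> u = s * \<beta> u0" using bb sq by (simp add: \<beta>\<sigma>[of u] \<beta>\<sigma>[of u0] s_def algebra_simps)
      moreover have "th u = s * th u0"
      proof -
        have squ: "\<sigma> u * \<sigma> u = 1" using \<sigma>[OF u(1)] by auto
        have "th u = \<sigma> u * (\<sigma> u * th u)" using squ by (simp add: mult.assoc[symmetric])
        also have "\<dots> = \<sigma> u * (\<sigma> u0 * th u0)" using cc by (simp add: c_def)
        finally show ?thesis by (simp add: s_def algebra_simps)
      qed
      note thb = calculation this
      have pp: "par E u = par E u0" using parU u u0 by auto
      have ww: "\<forall>v \<in> par E u. w u v = s * w u0 v"
        using wU parU u u0 thb(1) by auto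
      have uV: "u \<in> V - Vin" "u0 \<in> V - Vin" using UV u u0 by auto
      show False
        apply (rule notE[OF np])
        apply (rule bexI[where x=u, OF _ uV(1)])
        apply (rule bexI[where x=u0, OF _ uV(2)])
        apply (rule conjI[OF u(2)])
        apply (rule bexI[where x=s, OF _ s])
        using pp ww thb(2) by simp
    qed
  qed
  have a0: "a u0 \<noteq> 0" using \<alpha>nz u0 \<sigma>[OF u0(1)] by (auto simp: a_def)
  show False using core[OF fin u0(1) bpos bmax dst a0 eq2] .
qed

lemma pair_imp_reducible:
  fixes V Vin Vout :: "'a set" and E :: "('a \<times> 'a) set"
    and w :: "'a \<Rightarrow> 'a \<Rightarrow> real" and th lam :: "'a \<Rightarrow> real"
  assumes g: "gfnn V E Vin Vout w th lam"
    and u: "u1 \<in> V - Vin" "u2 \<in> V - Vin" "u1 \<noteq> u2"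
    and s: "s \<in> {-1, 1::real}" and pe: "par E u1 = par E u2"
    and we: "\<forall>v \<in> par E u1. w u1 v = s * w u2 v" and te: "th u1 = s * th u2"
  shows "reducible tanh V E Vin w th"
proof -
  define U where "U = {u1, u2}"
  define P where "P = par E u1"
  define \<kappa> where "\<kappa> v = w u2 v" for v
  define \<beta> where "\<beta> u = (if u = u1 then s else 1)" for u
  define \<alpha> where "\<alpha> u = (if u = u1 then 1 else - s)" for u
  have snz: "s \<noteq> 0" using s by auto
  have "\<forall>v\<in>P. \<kappa> v \<noteq> 0"
    using g pe unfolding gfnn_def P_def \<kappa>_def par_def by auto
  moreover have "\<forall>u\<in>U. par E u = P" using pe by (auto simp: U_def P_def)
  moreover have "\<forall>u\<in>U. \<beta> u \<noteq> 0" using snz by (auto simp: \<beta>_def)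
  moreover have "\<forall>u\<in>U. \<forall>v\<in>P. w u v = \<beta> u * \<kappa> v"
    using we u(3) by (auto simp: U_def P_def \<beta>_def \<kappa>_def)
  moreover have "\<forall>u\<in>U. \<alpha> u \<noteq> 0" using snz by (auto simp: \<alpha>_def U_def)
  moreover have "affine_symmetry tanh 0 U \<alpha> \<beta> th"
  proof -
    have A: "finite U" "U \<noteq> {}" by (auto simp: U_def)
    have B: "(\<Sum>x\<in>U. \<alpha> x * tanh (\<beta> x * t + th x)) = 0" for t
    proof -
      have e1: "s * t + th u1 = s * (t + th u2)" using te by (simp add: algebra_simps)
      have e2: "tanh (s * x) = s * tanh x" for x using s by auto
      have "tanh (s * t + th u1) = s * tanh (t + th u2)"
        by (simp only: e1 e2)
      then show ?thesis
        using u(3) by (simp add: U_def \<alpha>_def \<beta>_def)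
    qed
    have C: "\<not> (\<exists>I'\<subset>U. lin_dep_with_one I' (\<lambda>x t. tanh (\<beta> x * t + th x)))"
    proof
      assume "\<exists>I'\<subset>U. lin_dep_with_one I' (\<lambda>x t. tanh (\<beta> x * t + th x))"
      then obtain I' where I': "I' \<subset> U" "lin_dep_with_one I' (\<lambda>x t. tanh (\<beta> x * t + th x))" by blast
      have "I' = {} \<or> I' = {u1} \<or> I' = {u2}" using I'(1) u(3) unfolding U_def by blast
      moreover have "\<not> lin_dep_with_one {u} (\<lambda>x t. tanh (\<beta> x * t + th x))" for u
      proof
        assume "lin_dep_with_one {u} (\<lambda>x t. tanh (\<beta> x * t + th x))"
        then obtain cc c0 where "c0 \<noteq> 0 \<or> cc u \<noteq> 0" "\<forall>t. cc u * tanh (\<beta> u * t + th u) + c0 = 0"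
          unfolding lin_dep_with_one_def by auto
        with tanh_nonconst[of "\<beta> u" "cc u" "th u" c0] snz show False by (auto simp: \<beta>_def)
      qed
      ultimately show False using I'(2) no_lin_dep_empty by metis
    qed
    show ?thesis unfolding affine_symmetry_def using A B C by blast
  qed
  moreover have "U \<noteq> {}" "U \<subseteq> V - Vin" using u by (auto simp: U_def)
  ultimately show ?thesis unfolding reducible_def by blast
qed

theorem lemma1:
  fixes V Vin Vout :: "'a set" and E :: "('a \<times> 'a) set"
    and w :: "'a \<Rightarrow> 'a \<Rightarrow> real" and th lam :: "'a \<Rightarrow> real"
  assumes "gfnn V E Vin Vout w th lam"
  shows "irreducible tanh V E Vin w th \<longleftrightarrow>
    \<not> (\<exists>u1 \<in> V - Vin. \<exists>u2 \<in> V - Vin. u1 \<noteq> u2 \<and>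
          (\<exists>s \<in> {-1, 1::real}. par E u1 = par E u2 \<and>
             (\<forall>v \<in> par E u1. w u1 v = s * w u2 v) \<and> th u1 = s * th u2))"
  unfolding irreducible_def
  using reducible_imp_pair[of V E Vin w th] pair_imp_reducible[OF assms] by blast

end
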